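(* Let $\theta\in\mathbb R$ and $\epsilon>0$. If $U$ is a Clifford+$T$ operator and $\lambda$ a unit scalar with $\|R_z(\theta)-\lambda U\|\le\epsilon$, then there exist $\lambda'\in\{1,e^{i\pi/8}\}$ and a Clifford+$T$ operator $U'$ with the same $T$-count as $U$ such that $\|R_z(\theta)-\lambda'U'\|\le\epsilon$. Thus, in the approximate synthesis problem for $z$-rotations up to a phase, it suffices to consider only the scalars $\lambda=1$ and $\lambda=e^{i\pi/8}$.
   Context: Let $\omega=e^{i\pi/4}$, $H=\frac{1}{\sqrt2}\begin{bmatrix}1&1\\1&-1\end{bmatrix}$, $S=\begin{bmatrix}1&0\\0&i\end{bmatrix}$, $T=\begin{bmatrix}1&0\\0&\omega\end{bmatrix}$. A Clifford+$T$ operator is an element of the group generated by $\omega I,H,S,T$; its $T$-count is the minimal number of occurrences of $T$ or $T^{-1}$ in a word in these generators and their inverses representing it. $R_z(\theta)=\begin{bmatrix}e^{-i\theta/2}&0\\0&e^{i\theta/2}\end{bmatrix}$. The approximate synthesis problem for $z$-rotations up to a phase asks, given $\theta$ and $\epsilon$, for a Clifford+$T$ operator $U$ (of smallest possible $T$-count) and a unit scalar $\lambda$ with $\|R_z(\theta)-\lambda U\|\le\epsilon$, where $\|\cdot\|$ is the operator norm. *)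

theory Defs
  imports "HOL-Analysis.Analysis"
begin

type_synonym cmat2 = "complex ^ 2 ^ 2"

definition mat2 :: "complex \<Rightarrow> complex \<Rightarrow> complex \<Rightarrow> complex \<Rightarrow> cmat2" where
  "mat2 a b c d = (\<chi> i j. if i = 1 then (if j = 1 then a else b) else (if j = 1 then c else d))"

definition smult_mat :: "complex \<Rightarrow> cmat2 \<Rightarrow> cmat2" where
  "smult_mat c A = (\<chi> i j. c * A $ i $ j)"

definition op_norm :: "cmat2 \<Rightarrow> real" where
  "op_norm A = onorm (\<lambda>x :: complex ^ 2. A *v x)"

definition omega :: complex where "omega = exp (\<i> * of_real pi / 4)"

definition Hmat :: cmat2 where "Hmat = smult_mat (1 / of_real (sqrt 2)) (mat2 1 1 1 (-1))"
definition Smat :: cmat2 where "Smat = mat2 1 0 0 \<i>"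
definition Tmat :: cmat2 where "Tmat = mat2 1 0 0 omega"

definition Rz :: "real \<Rightarrow> cmat2" where
  "Rz theta = mat2 (exp (- \<i> * of_real theta / 2)) 0 0 (exp (\<i> * of_real theta / 2))"

datatype gen = GW | GH | GS | GT | GWi | GHi | GSi | GTi

fun gen_mat :: "gen \<Rightarrow> cmat2" where
  "gen_mat GW = smult_mat omega (mat 1)"
| "gen_mat GH = Hmat"
| "gen_mat GS = Smat"
| "gen_mat GT = Tmat"
| "gen_mat GWi = matrix_inv (smult_mat omega (mat 1))"
| "gen_mat GHi = matrix_inv Hmat"
| "gen_mat GSi = matrix_inv Smat"
| "gen_mat GTi = matrix_inv Tmat"

definition word_mat :: "gen list \<Rightarrow> cmat2" where
  "word_mat ws = foldr (\<lambda>g M. gen_mat g ** M) ws (mat 1)"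

definition clifford_T :: "cmat2 \<Rightarrow> bool" where
  "clifford_T U \<longleftrightarrow> (\<exists>ws. word_mat ws = U)"

definition tcount_word :: "gen list \<Rightarrow> nat" where
  "tcount_word ws = length (filter (\<lambda>g. g = GT \<or> g = GTi) ws)"

definition tcount :: "cmat2 \<Rightarrow> nat" where
  "tcount U = (LEAST n. \<exists>ws. word_mat ws = U \<and> tcount_word ws = n)"

end

theory Submission
  imports Defs
begin
definition zeta :: complex where "zeta = exp (\<i> * of_real pi / 8)"
lemma zeta2: "zeta^2 = omega"
  unfolding zeta_def omega_def by (simp add: exp_of_nat_mult[symmetric] algebra_simps)
lemma zeta4: "zeta^4 = \<i>"
proof -
  have "zeta^4 = exp (\<i> * of_real pi / 2)"
    unfolding zeta_def by (simp add: exp_of_nat_mult[symmetric] algebra_simps)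
  also have "\<dots> = cis (pi/2)" by (simp add: cis_conv_exp)
  finally show ?thesis by simp
qed
lemma zeta8: "zeta^8 = -1"
proof - have "zeta^8 = (zeta^4)^2" by (simp flip: power_mult) thus ?thesis by (simp add: zeta4) qed
lemma zeta16: "zeta^16 = 1" 
proof - have "zeta^16 = (zeta^8)^2" by (simp flip: power_mult) thus ?thesis by (simp add: zeta8) qed
lemma zeta_cnj: "zeta * cnj zeta = 1"
  unfolding zeta_def by (simp add: exp_cnj flip: exp_add)
lemma omega8: "omega^8 = 1"
proof - have "omega^8 = zeta^16" by (simp flip: zeta2 power_mult) thus ?thesis by (simp add: zeta16) qed

definition SUf :: "complex \<Rightarrow> complex \<Rightarrow> complex \<Rightarrow> cmat2" where
 "SUf c p q = smult_mat c (mat2 p (- cnj q) q (cnj p))"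

definition good :: "cmat2 \<Rightarrow> bool" where
 "good A \<longleftrightarrow> (\<exists>k p q. A = SUf (zeta^k) p q \<and> p * cnj p + q * cnj q = 1)"

lemma SUf_mult: "SUf c1 p1 q1 ** SUf c2 p2 q2 = SUf (c1*c2) (p1*p2 - cnj q1*q2) (q1*p2 + cnj p1 * q2)"
  by (simp add: SUf_def smult_mat_def mat2_def matrix_matrix_mult_def vec_eq_iff forall_2 sum_2 algebra_simps)

lemma SUf_one: "c*p = 1 \<Longrightarrow> c * cnj p = 1 \<Longrightarrow> SUf c p 0 = mat 1"
  by (simp add: SUf_def smult_mat_def mat2_def mat_def vec_eq_iff forall_2)

lemma good_mult: assumes "good A" "good B" shows "good (A ** B)"
proof -
  obtain k1 p1 q1 where 1: "A = SUf (zeta^k1) p1 q1" "p1 * cnj p1 + q1 * cnj q1 = 1" using assms(1) good_def by blast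
  obtain k2 p2 q2 where 2: "B = SUf (zeta^k2) p2 q2" "p2 * cnj p2 + q2 * cnj q2 = 1" using assms(2) good_def by blast
  have "(p1*p2 - cnj q1*q2) * cnj (p1*p2 - cnj q1*q2) + (q1*p2 + cnj p1 * q2) * cnj (q1*p2 + cnj p1 * q2)
     = (p1 * cnj p1 + q1 * cnj q1) * (p2 * cnj p2 + q2 * cnj q2)"
    by (simp add: algebra_simps)
  also have "\<dots> = 1" using 1 2 by simp
  finally show ?thesis unfolding good_def 1 2 SUf_mult by (metis power_add)
qed

lemma matrix_inv_eq: assumes "(A::cmat2) ** B = mat 1" "B ** A = mat 1" shows "matrix_inv A = B"
proof -
  have ex: "\<exists>B. A ** B = mat 1 \<and> B ** A = mat 1" using assms by blast
  let ?C = "matrix_inv A"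
  have C: "A ** ?C = mat 1 \<and> ?C ** A = mat 1"
    unfolding matrix_inv_def by (rule someI_ex[OF ex])
  have "B = (?C ** A) ** B" using C by (simp add: matrix_mul_lid)
  also have "\<dots> = ?C ** (A ** B)" by (simp add: matrix_mul_assoc)
  also have "\<dots> = ?C" using assms by (simp add: matrix_mul_rid)
  finally show ?thesis by simp
qed

lemma sq2: "(complex_of_real (sqrt 2))^2 = 2"
  by (metis of_real_numeral of_real_power real_sqrt_pow2 zero_le_numeral)

lemma gW: "smult_mat omega (mat 1) = SUf (zeta^2) 1 0"
  by (simp add: SUf_def smult_mat_def mat2_def mat_def vec_eq_iff forall_2 zeta2)
lemma gH: "Hmat = SUf (zeta^4) (-\<i>/of_real (sqrt 2)) (-\<i>/of_real (sqrt 2))"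
  by (simp add: Hmat_def SUf_def smult_mat_def mat2_def vec_eq_iff forall_2 zeta4 field_simps)
lemma gS: "Smat = SUf (zeta^2) (cnj (zeta^2)) 0"
proof -
  have "zeta^2 * cnj (zeta^2) = 1" using zeta_cnj by (simp add: power2_eq_square algebra_simps)
  moreover have "zeta^2 * zeta^2 = \<i>" using zeta4 by (simp flip: power_add)
  ultimately show ?thesis by (simp add: Smat_def SUf_def smult_mat_def mat2_def vec_eq_iff forall_2)
qed
lemma gT: "Tmat = SUf zeta (cnj zeta) 0"
  using zeta_cnj zeta2 by (simp add: Tmat_def SUf_def smult_mat_def mat2_def vec_eq_iff forall_2 power2_eq_square)
lemma zpow: "a + b = 16 \<Longrightarrow> zeta^a * zeta^b = 1"
  by (simp add: zeta16 flip: power_add)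
lemma good_SUf: "p*cnj p + q*cnj q = 1 \<Longrightarrow> good (SUf (zeta^k) p q)"
  unfolding good_def by blast
lemma good_SUf1: "p*cnj p + q*cnj q = 1 \<Longrightarrow> good (SUf zeta p q)"
  using good_SUf[of p q 1] by simp
lemma sq2': "complex_of_real (sqrt 2) * complex_of_real (sqrt 2) = 2" using sq2 by (simp add: power2_eq_square)
lemma zc2: "cnj (zeta^2) * zeta^2 = 1" using zeta_cnj by (simp add: power2_eq_square algebra_simps)
lemma zc2a: "(cnj zeta)^2 * zeta^2 = 1" "zeta^2 * (cnj zeta)^2 = 1" using zeta_cnj by (simp_all add: power2_eq_square algebra_simps)
lemma z15: "zeta * zeta^15 = 1" "zeta^15 * zeta = 1" using zeta16 by (simp_all flip: power_Suc power_Suc2)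
lemma zc1: "cnj zeta * zeta = 1" using zeta_cnj by (simp add: algebra_simps)
lemma Hunit: "(- \<i> / complex_of_real (sqrt 2)) * cnj (- \<i> / complex_of_real (sqrt 2)) +
   (- \<i> / complex_of_real (sqrt 2)) * cnj (- \<i> / complex_of_real (sqrt 2)) = 1"
  by (simp add: field_simps sq2 power2_eq_square[symmetric])

lemma good_gen: "good (gen_mat g)"
proof (cases g)
  case GW thus ?thesis by (auto simp: gW intro!: good_SUf)
next
  case GH thus ?thesis using Hunit by (auto simp: gH intro!: good_SUf)
next
  case GS thus ?thesis using zc2 by (auto simp: gS mult.commute intro!: good_SUf)
next
  case GT thus ?thesis using zc1 by (auto simp: gT mult.commute intro!: good_SUf1)
next
  case GWi
  have "matrix_inv (smult_mat omega (mat 1)) = SUf (zeta^14) 1 0"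
    unfolding gW by (rule matrix_inv_eq) (auto simp: SUf_mult zpow zeta16 intro!: SUf_one)
  thus ?thesis using GWi by (auto intro!: good_SUf)
next
  case GHi
  have "matrix_inv Hmat = Hmat"
  proof (rule matrix_inv_eq)
    have "Hmat ** Hmat = SUf (zeta^8) (-1) 0" unfolding gH SUf_mult
      by (simp add: field_simps sq2 power2_eq_square[symmetric] flip: power_add)
    also have "\<dots> = mat 1" by (rule SUf_one) (simp_all add: zeta8)
    finally show "Hmat ** Hmat = mat 1" "Hmat ** Hmat = mat 1" by auto
  qed
  thus ?thesis using GHi Hunit by (auto simp: gH intro!: good_SUf)
next
  case GSi
  have "matrix_inv Smat = SUf (zeta^14) (zeta^2) 0"
    unfolding gS by (rule matrix_inv_eq) (auto simp: SUf_mult zpow zeta16 zc2 zc2a intro!: SUf_one)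
  thus ?thesis using GSi zc2 by (auto simp: mult.commute intro!: good_SUf)
next
  case GTi
  have "matrix_inv Tmat = SUf (zeta^15) zeta 0"
    unfolding gT by (rule matrix_inv_eq) (auto simp: SUf_mult zpow zeta16 zc1 z15 zeta_cnj intro!: SUf_one)
  thus ?thesis using GTi zc1 by (auto simp: mult.commute intro!: good_SUf)
qed

lemma good_word: "good (word_mat ws)"
proof (induction ws)
  case Nil
  have "mat 1 = SUf (zeta^0) 1 0" by (simp add: SUf_one)
  thus ?case unfolding word_mat_def using good_SUf[of 1 0 0] by simp
next
  case (Cons g ws)
  have "word_mat (g # ws) = gen_mat g ** word_mat ws" by (simp add: word_mat_def)
  thus ?case using good_mult good_gen Cons by simp
qed
abbreviation Y :: "complex \<Rightarrow> complex \<Rightarrow> cmat2" where "Y p q \<equiv> mat2 p (- cnj q) q (cnj p)"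

lemma norm2_vec2: "(norm (x::complex^2))^2 = cmod (x$1)^2 + cmod (x$2)^2"
  by (simp add: norm_vec_def L2_set_def sum_2)
lemma cmod_sq: "cmod z ^2 = Re (z * cnj z)"
  by (simp add: complex_mult_cnj cmod_power2)

lemma upper:
  assumes ee: "e * cnj e = 1" and u: "p*cnj p + q*cnj q = 1" and s: "sr * sr = 1"
  shows "norm ((mat2 e 0 0 (cnj e) - smult_mat (of_real sr) (Y p q)) *v x)^2
         = (2 - 2 * sr * Re(cnj e * p)) * norm x ^2"
proof -
  define s where "s = complex_of_real sr"
  have cs: "cnj s = s" "s * s = 1" using s unfolding s_def by (simp_all flip: of_real_mult)
  define x1 where "x1 = x$1"
  define x2 where "x2 = x$2"
  define c1 where "c1 = e * x1 - s * (p * x1 - cnj q * x2)"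
  define c2 where "c2 = cnj e * x2 - s * (q * x1 + cnj p * x2)"
  have comp: "(mat2 e 0 0 (cnj e) - smult_mat s (Y p q)) *v x = vector [c1, c2]"
    unfolding c1_def c2_def x1_def x2_def
    by (simp add: vec_eq_iff forall_2 matrix_vector_mult_def sum_2 mat2_def smult_mat_def algebra_simps)
  have h: "cnj e * p + e * cnj p = complex_of_real (2 * Re (cnj e * p))"
    using complex_add_cnj[of "cnj e * p"] by simp
  have "c1 * cnj c1 + c2 * cnj c2 = (x1 * cnj x1 + x2 * cnj x2) *
      (e * cnj e + s * s * (p * cnj p + q * cnj q) - s * (cnj e * p + e * cnj p))"
    unfolding c1_def c2_def using cs(1) by (simp add: algebra_simps)
  also have "\<dots> = (x1 * cnj x1 + x2 * cnj x2) * of_real (2 - 2 * sr * Re(cnj e * p))"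
    using ee u cs h by (simp add: s_def)
  finally have E: "c1 * cnj c1 + c2 * cnj c2 = (x1 * cnj x1 + x2 * cnj x2) * of_real (2 - 2 * sr * Re(cnj e * p))" .
  have "norm ((mat2 e 0 0 (cnj e) - smult_mat s (Y p q)) *v x)^2 = Re (c1 * cnj c1 + c2 * cnj c2)"
    unfolding comp norm2_vec2 cmod_sq by simp
  also have "\<dots> = (2 - 2 * sr * Re(cnj e * p)) * (Re (x1 * cnj x1) + Re (x2 * cnj x2))"
    unfolding E by (simp add: algebra_simps)
  also have "\<dots> = (2 - 2 * sr * Re(cnj e * p)) * norm x ^2"
    unfolding norm2_vec2 cmod_sq x1_def x2_def by simp
  finally show ?thesis unfolding s_def .
qed

lemma lower1:
  assumes ee: "e * cnj e = 1" and u: "p*cnj p + q*cnj q = 1" and m: "mu * cnj mu = 1"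
  shows "norm ((mat2 e 0 0 (cnj e) - smult_mat mu (Y p q)) *v axis 1 1)^2 = 2 - 2 * Re (mu * (cnj e * p))"
proof -
  have comp: "(mat2 e 0 0 (cnj e) - smult_mat mu (Y p q)) *v axis 1 1 = vector [e - mu * p, - mu * q]"
    by (simp add: vec_eq_iff forall_2 matrix_vector_mult_def sum_2 mat2_def smult_mat_def axis_def)
  have h: "mu * (cnj e * p) + cnj mu * (e * cnj p) = complex_of_real (2 * Re (mu * (cnj e * p)))"
    using complex_add_cnj[of "mu * (cnj e * p)"] by simp
  have "(e - mu * p) * cnj (e - mu * p) + (- mu * q) * cnj (- mu * q)
       = e * cnj e + mu * cnj mu * (p*cnj p + q*cnj q) - (mu * (cnj e * p) + cnj mu * (e * cnj p))"
    by (simp add: algebra_simps)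
  also have "\<dots> = of_real (2 - 2 * Re (mu * (cnj e * p)))" using ee u m h by simp
  finally have E: "(e - mu * p) * cnj (e - mu * p) + (- mu * q) * cnj (- mu * q) = of_real (2 - 2 * Re (mu * (cnj e * p)))" .
  show ?thesis unfolding comp norm2_vec2 cmod_sq using arg_cong[OF E, of Re] by simp
qed

lemma lower2:
  assumes ee: "e * cnj e = 1" and u: "p*cnj p + q*cnj q = 1" and m: "mu * cnj mu = 1"
  shows "norm ((mat2 e 0 0 (cnj e) - smult_mat mu (Y p q)) *v axis 2 1)^2 = 2 - 2 * Re (mu * (e * cnj p))"
proof -
  have comp: "(mat2 e 0 0 (cnj e) - smult_mat mu (Y p q)) *v axis 2 1 = vector [mu * cnj q, cnj e - mu * cnj p]"
    by (simp add: vec_eq_iff forall_2 matrix_vector_mult_def sum_2 mat2_def smult_mat_def axis_def)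
  have h: "mu * (e * cnj p) + cnj mu * (cnj e * p) = complex_of_real (2 * Re (mu * (e * cnj p)))"
    using complex_add_cnj[of "mu * (e * cnj p)"] by simp
  have "(mu * cnj q) * cnj (mu * cnj q) + (cnj e - mu * cnj p) * cnj (cnj e - mu * cnj p)
       = e * cnj e + mu * cnj mu * (p*cnj p + q*cnj q) - (mu * (e * cnj p) + cnj mu * (cnj e * p))"
    by (simp add: algebra_simps)
  also have "\<dots> = of_real (2 - 2 * Re (mu * (e * cnj p)))" using ee u m h by simp
  finally have E: "(mu * cnj q) * cnj (mu * cnj q) + (cnj e - mu * cnj p) * cnj (cnj e - mu * cnj p) = of_real (2 - 2 * Re (mu * (e * cnj p)))" .
  show ?thesis unfolding comp norm2_vec2 cmod_sq using arg_cong[OF E, of Re] by simp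
qed

lemma naxis: "norm (axis (i::2) (1::complex)) = 1"
proof -
  have "\<forall>i::2. norm (axis i (1::complex))^2 = 1"
    unfolding norm2_vec2 by (simp add: forall_2 axis_def)
  hence "norm (axis i (1::complex))^2 = 1" by blast
  thus ?thesis using norm_ge_zero[of "axis i (1::complex)"] by (auto simp: power2_eq_1_iff)
qed

lemma key:
  assumes ee: "e * cnj e = 1" and u: "p*cnj p + q*cnj q = 1" and m: "mu * cnj mu = 1"
    and hn: "op_norm (mat2 e 0 0 (cnj e) - smult_mat mu (Y p q)) \<le> eps"
  shows "\<exists>sr. sr * sr = 1 \<and> op_norm (mat2 e 0 0 (cnj e) - smult_mat (of_real sr) (Y p q)) \<le> eps"
proof -
  define M where "M = mat2 e 0 0 (cnj e) - smult_mat mu (Y p q)"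
  have bl: "bounded_linear ((*v) M)" by simp
  have nb: "norm (M *v axis i 1) \<le> eps" for i :: 2
    using onorm[OF bl, of "axis i 1"] hn unfolding op_norm_def M_def naxis by simp
  have eps0: "0 \<le> eps" using nb[of 1] norm_ge_zero order_trans by blast
  define a where "a = cnj e * p"
  have s1: "2 - 2 * Re (mu * a) \<le> eps^2"
    using lower1[OF ee u m] power_mono[OF nb[of 1] norm_ge_zero, of 2] unfolding M_def a_def by simp
  have s2: "2 - 2 * Re (mu * cnj a) \<le> eps^2"
    using lower2[OF ee u m] power_mono[OF nb[of 2] norm_ge_zero, of 2] unfolding M_def a_def by simp
  have sum: "Re (mu * a) + Re (mu * cnj a) = 2 * Re mu * Re a" by (simp add: algebra_simps)
  have cm: "cmod mu = 1"
  proof -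
    have "cmod mu ^ 2 = 1" using m by (simp add: cmod_sq)
    thus ?thesis using norm_ge_zero[of mu] by (auto simp: power2_eq_1_iff)
  qed
  have rm: "\<bar>Re mu\<bar> \<le> 1" using abs_Re_le_cmod[of mu] cm by simp
  have "Re mu * Re a \<le> \<bar>Re a\<bar>"
  proof -
    have "Re mu * Re a \<le> \<bar>Re mu\<bar> * \<bar>Re a\<bar>" by (metis abs_ge_self abs_mult)
    also have "\<dots> \<le> \<bar>Re a\<bar>" using rm by (simp add: mult_left_le_one_le)
    finally show ?thesis .
  qed
  hence key: "2 - 2 * \<bar>Re a\<bar> \<le> eps^2" using s1 s2 sum by linarith
  define sr :: real where "sr = (if Re a \<ge> 0 then 1 else -1)"
  have sr1: "sr * sr = 1" and sra: "sr * Re a = \<bar>Re a\<bar>" by (auto simp: sr_def)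
  have "op_norm (mat2 e 0 0 (cnj e) - smult_mat (of_real sr) (Y p q)) \<le> eps"
    unfolding op_norm_def
  proof (rule onorm_le)
    fix x
    have "norm ((mat2 e 0 0 (cnj e) - smult_mat (of_real sr) (Y p q)) *v x)^2
         = (2 - 2 * \<bar>Re a\<bar>) * norm x ^2"
    proof -
      have "2 - 2 * sr * Re (cnj e * p) = 2 - 2 * \<bar>Re a\<bar>" using sra unfolding a_def by (simp add: mult.assoc)
      thus ?thesis using upper[OF ee u sr1, of x] by simp
    qed
    also have "\<dots> \<le> (eps * norm x)^2"
      unfolding power_mult_distrib using key by (intro mult_right_mono) simp_all
    finally show "norm ((mat2 e 0 0 (cnj e) - smult_mat (of_real sr) (Y p q)) *v x) \<le> eps * norm x"
      by (rule power2_le_imp_le) (use eps0 in simp)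
  qed
  thus ?thesis using sr1 by blast
qed

lemma smult_smult: "smult_mat c (smult_mat d A) = smult_mat (c*d) A"
  by (simp add: smult_mat_def vec_eq_iff)
lemma smult_1: "smult_mat 1 A = A"
  by (simp add: smult_mat_def vec_eq_iff)
lemma smult_mat1_mul: "smult_mat c (mat 1) ** A = smult_mat c A"
  by (simp add: smult_mat_def vec_eq_iff forall_2 matrix_matrix_mult_def sum_2 mat_def)

lemma wrep: "word_mat (replicate m GW @ ws) = smult_mat (omega^m) (word_mat ws)"
proof (induction m)
  case 0 thus ?case by (simp add: smult_1)
next
  case (Suc m)
  have "word_mat (replicate (Suc m) GW @ ws) = gen_mat GW ** word_mat (replicate m GW @ ws)"
    by (simp add: word_mat_def)
  thus ?case using Suc by (simp add: smult_mat1_mul smult_smult)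
qed

lemma tw: "tcount_word (replicate m GW @ ws) = tcount_word ws"
  by (simp add: tcount_word_def)

lemma tcount_omega: "tcount (smult_mat (omega^m) (word_mat ws)) = tcount (word_mat ws)"
proof -
  have "(\<exists>ws'. word_mat ws' = smult_mat (omega^m) (word_mat ws) \<and> tcount_word ws' = n)
     \<longleftrightarrow> (\<exists>ws'. word_mat ws' = word_mat ws \<and> tcount_word ws' = n)" for n
  proof
    assume "\<exists>ws'. word_mat ws' = smult_mat (omega^m) (word_mat ws) \<and> tcount_word ws' = n"
    then obtain ws' where w: "word_mat ws' = smult_mat (omega^m) (word_mat ws)" "tcount_word ws' = n" by blast
    have "omega^(7*m) * omega^m = omega^(8*m)" by (simp flip: power_add)
    also have "\<dots> = 1" by (simp add: power_mult omega8)
    finally have "omega^(7*m) * omega^m = 1" .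
    hence "word_mat (replicate (7*m) GW @ ws') = word_mat ws" using w by (simp add: wrep smult_smult smult_1)
    thus "\<exists>ws'. word_mat ws' = word_mat ws \<and> tcount_word ws' = n" using w tw by blast
  next
    assume "\<exists>ws'. word_mat ws' = word_mat ws \<and> tcount_word ws' = n"
    then obtain ws' where w: "word_mat ws' = word_mat ws" "tcount_word ws' = n" by blast
    thus "\<exists>ws'. word_mat ws' = smult_mat (omega^m) (word_mat ws) \<and> tcount_word ws' = n"
      using wrep[of m ws'] tw by metis
  qed
  thus ?thesis unfolding tcount_def by simp
qed

theorem corollary7p20:
  fixes theta eps :: real and U :: cmat2 and lam :: complex
  assumes "eps > 0"
    and "clifford_T U"
    and "cmod lam = 1"
    and "op_norm (Rz theta - smult_mat lam U) \<le> eps"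
  shows "\<exists>lam' U'. lam' \<in> {1, exp (\<i> * of_real pi / 8)} \<and> clifford_T U' \<and>
           tcount U' = tcount U \<and> op_norm (Rz theta - smult_mat lam' U') \<le> eps"
proof -
  obtain ws where ws: "word_mat ws = U" using assms(2) clifford_T_def by blast
  obtain k p q where U: "U = SUf (zeta^k) p q" and u: "p * cnj p + q * cnj q = 1"
    using good_word[of ws] ws good_def by blast
  define e where "e = exp (- \<i> * of_real theta / 2)"
  have Rz: "Rz theta = mat2 e 0 0 (cnj e)" unfolding Rz_def e_def by (simp add: exp_cnj)
  have ee: "e * cnj e = 1" unfolding e_def by (simp add: exp_cnj flip: exp_add)
  define mu where "mu = lam * zeta^k"
  have ll: "lam * cnj lam = 1" using assms(3) cmod_sq[of lam]
    by (metis complex_mult_cnj cmod_power2 of_real_1 one_power2)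
  have zz: "zeta^k * cnj (zeta^k) = 1" using zeta_cnj by (simp flip: power_mult_distrib)
  have m: "mu * cnj mu = 1" unfolding mu_def using ll zz
    by (simp add: algebra_simps)
  have "op_norm (mat2 e 0 0 (cnj e) - smult_mat mu (Y p q)) \<le> eps"
    using assms(4) unfolding Rz U SUf_def smult_smult mu_def .
  from key[OF ee u m this] obtain sr where sr: "sr * sr = 1"
    and hb: "op_norm (mat2 e 0 0 (cnj e) - smult_mat (of_real sr) (Y p q)) \<le> eps" by blast
  define j where "j = (if sr = 1 then 16*k else 16*k+8)"
  have z16k: "zeta^(16*k) = 1" by (simp add: power_mult zeta16)
  have zj: "zeta^j = of_real sr"
  proof (cases "sr = 1")
    case True thus ?thesis using z16k by (simp add: j_def)
  next
    case False hence "sr = -1" using sr by (metis square_eq_1_iff)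
    thus ?thesis using z16k False by (simp add: j_def power_add zeta8)
  qed
  define i where "i = j - k"
  have ik: "i + k = j" unfolding i_def j_def by auto
  define mm where "mm = i div 2"
  define lam' where "lam' = zeta^(i mod 2)"
  define U' where "U' = word_mat (replicate mm GW @ ws)"
  have U': "U' = smult_mat (omega^mm) U" unfolding U'_def wrep ws ..
  have "smult_mat lam' U' = smult_mat (zeta^(i mod 2) * zeta^(2*mm)) U"
    unfolding U' lam'_def smult_smult by (simp add: power_mult zeta2)
  also have "zeta^(i mod 2) * zeta^(2*mm) = zeta^i"
    unfolding mm_def by (simp flip: power_add)
  also have "smult_mat (zeta^i) U = smult_mat (of_real sr) (Y p q)"
    unfolding U SUf_def smult_smult by (simp flip: power_add add: ik zj)
  finally have eq: "smult_mat lam' U' = smult_mat (of_real sr) (Y p q)" .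
  have "lam' \<in> {1, exp (\<i> * of_real pi / 8)}"
    unfolding lam'_def zeta_def by (cases "i mod 2 = 0") (auto simp: mod2_eq_if)
  moreover have "clifford_T U'" unfolding U'_def clifford_T_def by blast
  moreover have "tcount U' = tcount U" unfolding U' using tcount_omega[of mm ws] ws by simp
  moreover have "op_norm (Rz theta - smult_mat lam' U') \<le> eps" unfolding eq Rz by (rule hb)
  ultimately show ?thesis by blast
qed
end
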